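(* Let $R$ be a unital associative ring and let $J=J_2\circ J_1$ act on $M_3(R)$. Then the domain of $J^n$ does not depend on $n$ for $n\geq 2$. For $n\geq 2$, ${\rm dom}(J^n)={\rm dom}(J)\cap{\rm dom}(J^{-1})$, and $M\in M_3(R)$ belongs to ${\rm dom}(J^n)$ if and only if all square submatrices of $M$ and of $J_2(M)$ are invertible.
   Context: $R^*$ denotes the units of $R$. $M_n^*(R)$ is the set of invertible $n\times n$ matrices over $R$, and $M_n^\star(R)$ the set of $n\times n$ matrices all of whose entries are in $R^*$. $J_1(M)=M^{-1}$ with domain $M_n^*(R)$; $J_2(M)_{jk}=(M_{kj})^{-1}$ with domain $M_n^\star(R)$. Compositions $g\circ f$ have domain $\{x\in{\rm dom}(f):f(x)\in{\rm dom}(g)\}$; $J^n$ is the $n$-fold composition. $J^{-1}:=J_1\circ J_2$, with domain $\{M\in M_n^\star(R): J_2(M)\in M_n^*(R)\}$. *)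

theory Defs
  imports "HOL-Analysis.Analysis"
begin

definition is_unit_r :: "'a::ring_1 \<Rightarrow> bool" where
  "is_unit_r x \<longleftrightarrow> (\<exists>y. x * y = 1 \<and> y * x = 1)"

definition uinv :: "'a::ring_1 \<Rightarrow> 'a" where
  "uinv x = (THE y. x * y = 1 \<and> y * x = 1)"

(* Partial maps are modelled as functions into option; None = outside the domain. *)
definition pdom :: "('a \<Rightarrow> 'b option) \<Rightarrow> 'a set" where
  "pdom f = {x. f x \<noteq> None}"

definition pcomp :: "('b \<Rightarrow> 'c option) \<Rightarrow> ('a \<Rightarrow> 'b option) \<Rightarrow> 'a \<Rightarrow> 'c option" where
  "pcomp g f x = (case f x of None \<Rightarrow> None | Some y \<Rightarrow> g y)"

definition J1 :: "'a::ring_1^'n^'n \<Rightarrow> ('a^'n^'n) option" where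
  "J1 M = (if invertible M then Some (matrix_inv M) else None)"

definition J2 :: "'a::ring_1^'n^'n \<Rightarrow> ('a^'n^'n) option" where
  "J2 M = (if (\<forall>j k. is_unit_r (M $ j $ k))
           then Some (\<chi> j k. uinv (M $ k $ j)) else None)"

definition Jmap :: "'a::ring_1^'n^'n \<Rightarrow> ('a^'n^'n) option" where
  "Jmap = pcomp J2 J1"

definition Jinvmap :: "'a::ring_1^'n^'n \<Rightarrow> ('a^'n^'n) option" where
  "Jinvmap = pcomp J1 J2"

fun Jpow :: "nat \<Rightarrow> 'a::ring_1^'n^'n \<Rightarrow> ('a^'n^'n) option" where
  "Jpow 0 = Some"
| "Jpow (Suc n) = pcomp Jmap (Jpow n)"

(* This is independent of the chosen ordering of rows and columns. *)
definition submatrix_invertible :: "'a::ring_1^'n^'n \<Rightarrow> 'n set \<Rightarrow> 'n set \<Rightarrow> bool" where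
  "submatrix_invertible M I K \<longleftrightarrow>
     (\<exists>N :: 'n \<Rightarrow> 'n \<Rightarrow> 'a.
        (\<forall>i\<in>I. \<forall>i'\<in>I. (\<Sum>k\<in>K. M $ i $ k * N k i') = (if i = i' then 1 else 0)) \<and>
        (\<forall>k\<in>K. \<forall>k'\<in>K. (\<Sum>i\<in>I. N k i * M $ i $ k') = (if k = k' then 1 else 0)))"

definition all_square_submatrices_invertible :: "'a::ring_1^'n^'n \<Rightarrow> bool" where
  "all_square_submatrices_invertible M \<longleftrightarrow>
     (\<forall>I K :: 'n set. I \<noteq> {} \<and> card I = card K \<longrightarrow> submatrix_invertible M I K)"

end

theory Submission
  imports Defs
begin

lemma unit_inv_eq:
  fixes x :: "'a::ring_1"
  assumes "x * y = 1" "y * x = 1"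
  shows "is_unit_r x" "uinv x = y"
proof -
  show "is_unit_r x" using assms unfolding is_unit_r_def by blast
  have uniq: "\<And>z. x * z = 1 \<and> z * x = 1 \<Longrightarrow> z = y"
  proof -
    fix z assume h: "x * z = 1 \<and> z * x = 1"
    have "z = z * (x * y)" using assms by simp
    also have "\<dots> = (z * x) * y" by (simp add: mult.assoc)
    also have "\<dots> = y" using h by simp
    finally show "z = y" .
  qed
  show "uinv x = y" unfolding uinv_def
  proof (rule the_equality)
    show "x * y = 1 \<and> y * x = 1" using assms by simp
    show "\<And>z. x * z = 1 \<and> z * x = 1 \<Longrightarrow> z = y" by (rule uniq)
  qed
qed

lemma unit_props:
  fixes x :: "'a::ring_1"
  assumes "is_unit_r x"
  shows "x * uinv x = 1" "uinv x * x = 1"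
proof -
  obtain y where "x * y = 1" "y * x = 1" using assms unfolding is_unit_r_def by blast
  then have "uinv x = y" by (rule unit_inv_eq)
  then show "x * uinv x = 1" "uinv x * x = 1" using \<open>x*y=1\<close> \<open>y*x=1\<close> by auto
qed

lemma unit_cancel [simp]:
  fixes x :: "'a::ring_1"
  assumes "is_unit_r x"
  shows "x * uinv x = 1" "uinv x * x = 1" "x * (uinv x * z) = z" "uinv x * (x * z) = z"
  using unit_props[OF assms] by (auto simp: mult.assoc[symmetric])

lemma unit_uinv [simp]:
  fixes x :: "'a::ring_1"
  assumes "is_unit_r x"
  shows "is_unit_r (uinv x)" "uinv (uinv x) = x"
  using unit_inv_eq[of "uinv x" x] unit_props[OF assms] by auto

lemma unit_mult:
  fixes x :: "'a::ring_1"
  assumes "is_unit_r x" "is_unit_r y"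
  shows "is_unit_r (x * y)" "uinv (x*y) = uinv y * uinv x"
proof -
  have "(x*y) * (uinv y * uinv x) = 1" using assms by (simp add: mult.assoc)
  moreover have "(uinv y * uinv x) * (x*y) = 1" using assms by (simp add: mult.assoc)
  ultimately show "is_unit_r (x * y)" "uinv (x*y) = uinv y * uinv x" using unit_inv_eq by blast+
qed

lemma unit_neg:
  fixes x :: "'a::ring_1"
  assumes "is_unit_r x"
  shows "is_unit_r (- x)" "uinv (-x) = - uinv x"
proof -
  have "(-x) * (- uinv x) = 1" "(- uinv x) * (-x) = 1" using assms by simp_all
  then show "is_unit_r (- x)" "uinv (-x) = - uinv x" using unit_inv_eq by blast+
qed

lemma unit_one [simp]: "is_unit_r (1::'a::ring_1)" "uinv (1::'a::ring_1) = 1"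
  using unit_inv_eq[of "1::'a" 1] by auto

definition inv2 :: "'a::ring_1 \<Rightarrow> 'a \<Rightarrow> 'a \<Rightarrow> 'a \<Rightarrow> bool" where
  "inv2 a b c d \<longleftrightarrow> (\<exists>e f g h. a*e + b*g = 1 \<and> a*f + b*h = 0 \<and> c*e + d*g = 0 \<and> c*f + d*h = 1
      \<and> e*a + f*c = 1 \<and> e*b + f*d = 0 \<and> g*a + h*c = 0 \<and> g*b + h*d = 1)"

lemma inv2_swap:
  assumes "inv2 a b c d" shows "inv2 d c b a"
  using assms unfolding inv2_def by (metis add.commute)

lemma inv2_neg:
  assumes "inv2 a b c d" shows "inv2 (-a) (-b) (-c) (-d)"
proof -
  obtain e f g h where H: "a*e + b*g = 1" "a*f + b*h = 0" "c*e + d*g = 0" "c*f + d*h = 1"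
      "e*a + f*c = 1" "e*b + f*d = 0" "g*a + h*c = 0" "g*b + h*d = 1"
    using assms unfolding inv2_def by blast
  show ?thesis unfolding inv2_def
    by (rule exI[of _ "-e"], rule exI[of _ "-f"], rule exI[of _ "-g"], rule exI[of _ "-h"]) (simp add: H)
qed

lemma inv2_scale:
  assumes "inv2 a b c d" "is_unit_r p1" "is_unit_r p2" "is_unit_r q1" "is_unit_r q2"
  shows "inv2 (p1*a*q1) (p1*b*q2) (p2*c*q1) (p2*d*q2)"
proof -
  obtain e f g h where H: "a*e + b*g = 1" "a*f + b*h = 0" "c*e + d*g = 0" "c*f + d*h = 1"
      "e*a + f*c = 1" "e*b + f*d = 0" "g*a + h*c = 0" "g*b + h*d = 1"
    using assms unfolding inv2_def by blast
  let ?e = "uinv q1 * e * uinv p1" and ?f = "uinv q1 * f * uinv p2"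
  let ?g = "uinv q2 * g * uinv p1" and ?h = "uinv q2 * h * uinv p2"
  have 1: "p1*a*q1*?e + p1*b*q2*?g = p1*(a*e + b*g)*uinv p1"
    using assms by (simp add: algebra_simps)
  have 2: "p1*a*q1*?f + p1*b*q2*?h = p1*(a*f + b*h)*uinv p2"
    using assms by (simp add: algebra_simps)
  have 3: "p2*c*q1*?e + p2*d*q2*?g = p2*(c*e + d*g)*uinv p1"
    using assms by (simp add: algebra_simps)
  have 4: "p2*c*q1*?f + p2*d*q2*?h = p2*(c*f + d*h)*uinv p2"
    using assms by (simp add: algebra_simps)
  have 5: "?e*(p1*a*q1) + ?f*(p2*c*q1) = uinv q1 * (e*a + f*c) * q1"
    using assms by (simp add: algebra_simps)
  have 6: "?e*(p1*b*q2) + ?f*(p2*d*q2) = uinv q1 * (e*b + f*d) * q2"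
    using assms by (simp add: algebra_simps)
  have 7: "?g*(p1*a*q1) + ?h*(p2*c*q1) = uinv q2 * (g*a + h*c) * q1"
    using assms by (simp add: algebra_simps)
  have 8: "?g*(p1*b*q2) + ?h*(p2*d*q2) = uinv q2 * (g*b + h*d) * q2"
    using assms by (simp add: algebra_simps)
  show ?thesis unfolding inv2_def
    apply (rule exI[of _ ?e], rule exI[of _ ?f], rule exI[of _ ?g], rule exI[of _ ?h])
    using assms by (simp only: 1 2 3 4 5 6 7 8 H) simp
qed

lemma inv2_iff_quasi:
  fixes a :: "'a::ring_1"
  assumes d: "is_unit_r d"
  shows "inv2 a b c d \<longleftrightarrow> is_unit_r (a - b * uinv d * c)"
proof
  assume "inv2 a b c d"
  then obtain e f g h where H: "a*e + b*g = 1" "a*f + b*h = 0" "c*e + d*g = 0" "c*f + d*h = 1"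
      "e*a + f*c = 1" "e*b + f*d = 0" "g*a + h*c = 0" "g*b + h*d = 1"
    unfolding inv2_def by blast
  have g: "g = - (uinv d * c * e)"
  proof -
    have "uinv d * (c*e + d*g) = 0" using H by simp
    then show ?thesis using d by (simp add: algebra_simps eq_neg_iff_add_eq_0)
  qed
  have f: "f = - (e * b * uinv d)"
  proof -
    have "(e*b + f*d) * uinv d = 0" using H by simp
    then show ?thesis using d by (simp add: algebra_simps eq_neg_iff_add_eq_0 mult.assoc)
  qed
  have "(a - b * uinv d * c) * e = 1" using H(1) unfolding g by (simp add: algebra_simps)
  moreover have "e * (a - b * uinv d * c) = 1" using H(5) unfolding f by (simp add: algebra_simps)
  ultimately show "is_unit_r (a - b * uinv d * c)" using unit_inv_eq by blast
next
  assume s: "is_unit_r (a - b * uinv d * c)"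
  define s' where "s' = uinv (a - b * uinv d * c)"
  have s1: "(a - b * uinv d * c) * s' = 1" "s' * (a - b * uinv d * c) = 1"
    using s unfolding s'_def by simp_all
  have s1a: "a * s' = 1 + b * uinv d * c * s'" using s1(1) by (simp add: algebra_simps)
  have s1b: "s' * a = 1 + s' * b * uinv d * c" using s1(2) by (simp add: algebra_simps)
  let ?e = "s'" and ?f = "- (s' * b * uinv d)" and ?g = "- (uinv d * c * s')"
  let ?h = "uinv d + uinv d * c * s' * b * uinv d"
  have "a*?e + b*?g = 1" using s1a by (simp add: algebra_simps)
  moreover have "a*?f + b*?h = 0"
  proof -
    have "a*?f + b*?h = - ((a * s') * b * uinv d) + b * uinv d + b * uinv d * c * s' * b * uinv d"
      using d by (simp add: algebra_simps)
    also have "\<dots> = 0" unfolding s1a by (simp add: algebra_simps)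
    finally show ?thesis .
  qed
  moreover have "c*?e + d*?g = 0" using d by (simp add: algebra_simps)
  moreover have "c*?f + d*?h = 1" using d by (simp add: algebra_simps)
  moreover have "?e*a + ?f*c = 1" using s1b by (simp add: algebra_simps)
  moreover have "?e*b + ?f*d = 0" using d by (simp add: algebra_simps)
  moreover have "?g*a + ?h*c = 0"
  proof -
    have "?g*a + ?h*c = - (uinv d * c * (s' * a)) + uinv d * c + uinv d * c * s' * b * uinv d * c"
      using d by (simp add: algebra_simps)
    also have "\<dots> = 0" unfolding s1b by (simp add: algebra_simps)
    finally show ?thesis .
  qed
  moreover have "?g*b + ?h*d = 1" using d by (simp add: algebra_simps)
  ultimately show "inv2 a b c d" unfolding inv2_def by blast
qed

lemma inv2_hinv:
  fixes a :: "'a::ring_1"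
  assumes u: "is_unit_r a" "is_unit_r b" "is_unit_r c" "is_unit_r d" and h: "inv2 a b c d"
  shows "inv2 (uinv a) (uinv c) (uinv b) (uinv d)"
proof -
  have s: "is_unit_r (a - b * uinv d * c)" using h inv2_iff_quasi u(4) by blast
  have eq: "uinv a - uinv c * uinv (uinv d) * uinv b
      = uinv c * ((- (d * uinv b)) * (a - b * uinv d * c)) * uinv a"
    using u by (simp add: algebra_simps)
  have "is_unit_r (uinv c * ((- (d * uinv b)) * (a - b * uinv d * c)) * uinv a)"
    using u s by (intro unit_mult unit_neg) simp_all
  then show ?thesis using inv2_iff_quasi[of "uinv d" "uinv a" "uinv c" "uinv b"] u eq by simp
qed

lemma inv2_hinv_iff:
  fixes a :: "'a::ring_1"
  assumes u: "is_unit_r a" "is_unit_r b" "is_unit_r c" "is_unit_r d"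
  shows "inv2 (uinv a) (uinv c) (uinv b) (uinv d) \<longleftrightarrow> inv2 a b c d"
  using inv2_hinv[OF u] inv2_hinv[of "uinv a" "uinv c" "uinv b" "uinv d"] u by auto

lemma inv2_scale_iff:
  assumes "is_unit_r p1" "is_unit_r p2" "is_unit_r q1" "is_unit_r q2"
  shows "inv2 (p1*a*q1) (p1*b*q2) (p2*c*q1) (p2*d*q2) \<longleftrightarrow> inv2 a b c d"
proof
  assume "inv2 (p1*a*q1) (p1*b*q2) (p2*c*q1) (p2*d*q2)"
  from inv2_scale[OF this, of "uinv p1" "uinv p2" "uinv q1" "uinv q2"] assms
  show "inv2 a b c d" by (simp add: mult.assoc)
qed (rule inv2_scale[OF _ assms])

lemma inv2_neg_iff: "inv2 (-a) (-b) (-c) (-d) \<longleftrightarrow> inv2 a b c d"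
  using inv2_neg[of a b c d] inv2_neg[of "-a" "-b" "-c" "-d"] by auto

lemma inv2_swap_iff: "inv2 d c b a \<longleftrightarrow> inv2 a b c d"
  using inv2_swap by blast

lemma mm_entry: "(A ** B) $ i $ j = (\<Sum>k\<in>UNIV. A$i$k * B$k$j)"
  by (simp add: matrix_matrix_mult_def)

lemma mat1_entry: "(mat 1 :: 'a::zero_neq_one^'n^'n) $ i $ j = (if i = j then 1 else 0)"
  by (simp add: mat_def)

lemma matrix_inv_props:
  fixes M :: "'a::ring_1^'n^'n"
  assumes "invertible M"
  shows "M ** matrix_inv M = mat 1" "matrix_inv M ** M = mat 1"
proof -
  have "\<exists>A'. M ** A' = mat 1 \<and> A' ** M = mat 1" using assms unfolding invertible_def by blast
  then have "M ** matrix_inv M = mat 1 \<and> matrix_inv M ** M = mat 1"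
    unfolding matrix_inv_def by (rule someI_ex)
  then show "M ** matrix_inv M = mat 1" "matrix_inv M ** M = mat 1" by auto
qed

lemma matrix_inv_unique:
  fixes M :: "'a::ring_1^'n^'n"
  assumes "M ** W = mat 1" "W ** M = mat 1"
  shows "invertible M" "matrix_inv M = W"
proof -
  show inv: "invertible M" using assms unfolding invertible_def by blast
  have "matrix_inv M = matrix_inv M ** (M ** W)" using assms by simp
  also have "\<dots> = (matrix_inv M ** M) ** W" by (simp add: matrix_mul_assoc)
  also have "\<dots> = W" using matrix_inv_props[OF inv] by simp
  finally show "matrix_inv M = W" .
qed

lemma matrix_inv_inv:
  fixes M :: "'a::ring_1^'n^'n"
  assumes "invertible M"
  shows "invertible (matrix_inv M)" "matrix_inv (matrix_inv M) = M"
  using matrix_inv_unique[of "matrix_inv M" M] matrix_inv_props[OF assms] by auto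

lemma sub_UNIV_iff:
  fixes M :: "'a::ring_1^'n^'n"
  shows "submatrix_invertible M UNIV UNIV \<longleftrightarrow> invertible M"
proof
  assume "submatrix_invertible M UNIV UNIV"
  then obtain N where N: "\<forall>i i'. (\<Sum>k\<in>UNIV. M $ i $ k * N k i') = (if i = i' then 1 else 0)"
      "\<forall>k k'. (\<Sum>i\<in>UNIV. N k i * M $ i $ k') = (if k = k' then 1 else 0)"
    unfolding submatrix_invertible_def by auto
  let ?W = "\<chi> i j. N i j"
  have "M ** ?W = mat 1" "?W ** M = mat 1"
    using N by (simp_all add: vec_eq_iff mm_entry mat1_entry)
  then show "invertible M" unfolding invertible_def by blast
next
  assume "invertible M"
  then obtain W where W: "M ** W = mat 1" "W ** M = mat 1" unfolding invertible_def by blast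
  have "\<forall>i i'. (\<Sum>k\<in>UNIV. M $ i $ k * W $ k $ i') = (if i = i' then 1 else 0)"
    using W(1) by (metis mm_entry mat1_entry)
  moreover have "\<forall>k k'. (\<Sum>i\<in>UNIV. W $ k $ i * M $ i $ k') = (if k = k' then 1 else 0)"
    using W(2) by (metis mm_entry mat1_entry)
  ultimately show "submatrix_invertible M UNIV UNIV"
    unfolding submatrix_invertible_def by (intro exI[of _ "\<lambda>i j. W$i$j"]) auto
qed

lemma sub_single_iff:
  fixes M :: "'a::ring_1^'n^'n"
  shows "submatrix_invertible M {i} {k} \<longleftrightarrow> is_unit_r (M$i$k)"
proof
  assume "submatrix_invertible M {i} {k}"
  then obtain N where "M$i$k * N k i = 1" "N k i * M$i$k = 1"
    unfolding submatrix_invertible_def by auto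
  then show "is_unit_r (M$i$k)" unfolding is_unit_r_def by blast
next
  assume "is_unit_r (M$i$k)"
  then show "submatrix_invertible M {i} {k}"
    unfolding submatrix_invertible_def by (intro exI[of _ "\<lambda>_ _. uinv (M$i$k)"]) simp
qed

lemma sub_pair_iff:
  fixes M :: "'a::ring_1^'n^'n"
  assumes "x \<noteq> y" "u \<noteq> v"
  shows "submatrix_invertible M {x,y} {u,v} \<longleftrightarrow> inv2 (M$x$u) (M$x$v) (M$y$u) (M$y$v)"
proof
  assume "submatrix_invertible M {x,y} {u,v}"
  then obtain N where N: "\<forall>i\<in>{x,y}. \<forall>i'\<in>{x,y}. (\<Sum>k\<in>{u,v}. M $ i $ k * N k i') = (if i = i' then 1 else 0)"
      "\<forall>k\<in>{u,v}. \<forall>k'\<in>{u,v}. (\<Sum>i\<in>{x,y}. N k i * M $ i $ k') = (if k = k' then 1 else 0)"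
    unfolding submatrix_invertible_def by blast
  show "inv2 (M$x$u) (M$x$v) (M$y$u) (M$y$v)"
    unfolding inv2_def
    apply (rule exI[of _ "N u x"], rule exI[of _ "N u y"], rule exI[of _ "N v x"], rule exI[of _ "N v y"])
    using N assms by (auto simp: add.commute)
next
  assume "inv2 (M$x$u) (M$x$v) (M$y$u) (M$y$v)"
  then obtain e f g h where H: "M$x$u * e + M$x$v * g = 1" "M$x$u * f + M$x$v * h = 0"
     "M$y$u * e + M$y$v * g = 0" "M$y$u * f + M$y$v * h = 1"
     "e * M$x$u + f * M$y$u = 1" "e * M$x$v + f * M$y$v = 0" "g * M$x$u + h * M$y$u = 0" "g * M$x$v + h * M$y$v = 1"
    unfolding inv2_def by blast
  define N where "N = (\<lambda>k i. if k = u then (if i = x then e else f) else (if i = x then g else h))"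
  show "submatrix_invertible M {x,y} {u,v}"
    unfolding submatrix_invertible_def
    by (rule exI[of _ N]) (use H assms in \<open>auto simp: N_def\<close>)
qed

lemma sum_split_compl:
  fixes f :: "'n::finite \<Rightarrow> 'a::comm_monoid_add"
  shows "sum f UNIV = sum f K + sum f (- K)"
  by (metis Compl_partition2 Diff_Compl boolean_algebra.conj_cancel_right finite sum.union_disjoint
      double_complement sum.subset_diff top_greatest)

lemma jacobi_compl:
  fixes M W :: "'a::ring_1^'n::finite^'n"
  assumes MW: "M ** W = mat 1" and WM: "W ** M = mat 1"
    and sub: "submatrix_invertible W (- K) (- I)"
  shows "submatrix_invertible M I K"
proof -
  have mw: "\<And>i j. (\<Sum>k\<in>UNIV. M$i$k * W$k$j) = (if i = j then 1 else 0)"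
    using MW by (metis mm_entry mat1_entry)
  have wm: "\<And>i j. (\<Sum>k\<in>UNIV. W$i$k * M$k$j) = (if i = j then 1 else 0)"
    using WM by (metis mm_entry mat1_entry)
  obtain X where X1: "\<And>k k'. k \<in> -K \<Longrightarrow> k' \<in> -K \<Longrightarrow> (\<Sum>j\<in>-I. W$k$j * X j k') = (if k = k' then 1 else 0)"
      and X2: "\<And>j j'. j \<in> -I \<Longrightarrow> j' \<in> -I \<Longrightarrow> (\<Sum>k\<in>-K. X j k * W$k$j') = (if j = j' then 1 else 0)"
    using sub unfolding submatrix_invertible_def by blast
  define N where "N k i = W$k$i - (\<Sum>j\<in>-I. \<Sum>k'\<in>-K. W$k$j * X j k' * W$k'$i)" for k i
  have part1: "(\<Sum>k\<in>K. M$i$k * N k i') = (if i = i' then 1 else 0)" if "i \<in> I" "i' \<in> I" for i i'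
  proof -
    have f3: "(\<Sum>k\<in>K. M$i$k * W$k$j) = - (\<Sum>k\<in>-K. M$i$k * W$k$j)" if "j \<in> -I" for j
    proof -
      have "(\<Sum>k\<in>K. M$i$k * W$k$j) + (\<Sum>k\<in>-K. M$i$k * W$k$j) = 0"
        using mw[of i j] sum_split_compl[of "\<lambda>k. M$i$k * W$k$j" K] \<open>i \<in> I\<close> that by auto
      then show ?thesis by (simp add: eq_neg_iff_add_eq_0)
    qed
    have "(\<Sum>k\<in>K. M$i$k * (\<Sum>j\<in>-I. \<Sum>k'\<in>-K. W$k$j * X j k' * W$k'$i'))
        = (\<Sum>j\<in>-I. \<Sum>k'\<in>-K. (\<Sum>k\<in>K. M$i$k * W$k$j) * X j k' * W$k'$i')"
      by (simp add: sum_distrib_left sum_distrib_right mult.assoc sum.swap[of _ K])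
    also have "\<dots> = (\<Sum>j\<in>-I. \<Sum>k'\<in>-K. - ((\<Sum>k\<in>-K. M$i$k * W$k$j) * X j k' * W$k'$i'))"
      using f3 by (intro sum.cong refl) simp
    also have "\<dots> = - (\<Sum>k\<in>-K. \<Sum>k'\<in>-K. M$i$k * (\<Sum>j\<in>-I. W$k$j * X j k') * W$k'$i')"
      by (simp add: sum_negf sum_distrib_left sum_distrib_right mult.assoc)
         (subst sum.swap, simp add: sum.swap[of _ "-I"])
    also have "\<dots> = - (\<Sum>k\<in>-K. \<Sum>k'\<in>-K. M$i$k * (if k = k' then 1 else 0) * W$k'$i')"
      using X1 by (intro arg_cong[where f=uminus] sum.cong refl) simp
    also have "\<dots> = - (\<Sum>k\<in>-K. M$i$k * W$k$i')"
      by (simp add: if_distrib if_distribR cong: if_cong)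
    finally have "(\<Sum>k\<in>K. M$i$k * (\<Sum>j\<in>-I. \<Sum>k'\<in>-K. W$k$j * X j k' * W$k'$i'))
        = - (\<Sum>k\<in>-K. M$i$k * W$k$i')" .
    then have "(\<Sum>k\<in>K. M$i$k * N k i') = (\<Sum>k\<in>K. M$i$k * W$k$i') + (\<Sum>k\<in>-K. M$i$k * W$k$i')"
      by (simp add: N_def right_diff_distrib sum_subtractf)
    also have "\<dots> = (if i = i' then 1 else 0)"
      using mw[of i i'] sum_split_compl[of "\<lambda>k. M$i$k * W$k$i'" K] by simp
    finally show ?thesis .
  qed
  have part2: "(\<Sum>i\<in>I. N k i * M$i$k') = (if k = k' then 1 else 0)" if "k \<in> K" "k' \<in> K" for k k'
  proof -
    have f3: "(\<Sum>i\<in>I. W$k''$i * M$i$k') = - (\<Sum>i\<in>-I. W$k''$i * M$i$k')" if "k'' \<in> -K" for k''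
    proof -
      have "(\<Sum>i\<in>I. W$k''$i * M$i$k') + (\<Sum>i\<in>-I. W$k''$i * M$i$k') = 0"
        using wm[of k'' k'] sum_split_compl[of "\<lambda>i. W$k''$i * M$i$k'" I] \<open>k' \<in> K\<close> that by auto
      then show ?thesis by (simp add: eq_neg_iff_add_eq_0)
    qed
    have "(\<Sum>i\<in>I. (\<Sum>j\<in>-I. \<Sum>k''\<in>-K. W$k$j * X j k'' * W$k''$i) * M$i$k')
        = (\<Sum>j\<in>-I. \<Sum>k''\<in>-K. W$k$j * X j k'' * (\<Sum>i\<in>I. W$k''$i * M$i$k'))"
      by (simp add: sum_distrib_left sum_distrib_right mult.assoc)
         (subst sum.swap, simp add: sum.swap[of _ I])
    also have "\<dots> = (\<Sum>j\<in>-I. \<Sum>k''\<in>-K. - (W$k$j * X j k'' * (\<Sum>i\<in>-I. W$k''$i * M$i$k')))"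
      using f3 by (intro sum.cong refl) simp
    also have "\<dots> = - (\<Sum>j\<in>-I. \<Sum>i\<in>-I. W$k$j * (\<Sum>k''\<in>-K. X j k'' * W$k''$i) * M$i$k')"
      by (simp add: sum_negf sum_distrib_left sum_distrib_right mult.assoc)
         (subst (2) sum.swap, simp add: sum.swap[of _ "-K"])
    also have "\<dots> = - (\<Sum>j\<in>-I. \<Sum>i\<in>-I. W$k$j * (if j = i then 1 else 0) * M$i$k')"
      using X2 by (intro arg_cong[where f=uminus] sum.cong refl) simp
    also have "\<dots> = - (\<Sum>j\<in>-I. W$k$j * M$j$k')"
      by (simp add: if_distrib if_distribR cong: if_cong)
    finally have "(\<Sum>i\<in>I. (\<Sum>j\<in>-I. \<Sum>k''\<in>-K. W$k$j * X j k'' * W$k''$i) * M$i$k')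
        = - (\<Sum>j\<in>-I. W$k$j * M$j$k')" .
    then have "(\<Sum>i\<in>I. N k i * M$i$k') = (\<Sum>i\<in>I. W$k$i * M$i$k') + (\<Sum>i\<in>-I. W$k$i * M$i$k')"
      by (simp add: N_def left_diff_distrib sum_subtractf)
    also have "\<dots> = (if k = k' then 1 else 0)"
      using wm[of k k'] sum_split_compl[of "\<lambda>i. W$k$i * M$i$k'" I] by simp
    finally show ?thesis .
  qed
  show ?thesis unfolding submatrix_invertible_def
    by (rule exI[of _ N]) (use part1 part2 in blast)
qed

definition J2m :: "'a::ring_1^'n^'n \<Rightarrow> 'a^'n^'n" where
  "J2m M = (\<chi> j k. uinv (M $ k $ j))"

definition UU :: "'a::ring_1^'n^'n \<Rightarrow> bool" where
  "UU M \<longleftrightarrow> (\<forall>j k. is_unit_r (M $ j $ k))"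

lemma J2_eq: "J2 M = (if UU M then Some (J2m M) else None)"
  unfolding J2_def J2m_def UU_def by simp

lemma J2m_entry [simp]: "J2m M $ j $ k = uinv (M $ k $ j)"
  unfolding J2m_def by simp

lemma UU_J2m: "UU M \<Longrightarrow> UU (J2m M)"
  unfolding UU_def by simp

lemma J2m_J2m: "UU M \<Longrightarrow> J2m (J2m M) = M"
  unfolding UU_def by (simp add: vec_eq_iff)

lemma d3: "(1::3) \<noteq> 2" "(1::3) \<noteq> 3" "(2::3) \<noteq> 3" "(2::3) \<noteq> 1" "(3::3) \<noteq> 1" "(3::3) \<noteq> 2"
  by simp_all

lemma compl_1: "- {1::3} = {2,3}"
proof (rule set_eqI)
  fix x :: 3 show "x \<in> - {1} \<longleftrightarrow> x \<in> {2,3}" using exhaust_3[of x] d3 by auto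
qed
lemma compl_2: "- {2::3} = {1,3}"
proof (rule set_eqI)
  fix x :: 3 show "x \<in> - {2} \<longleftrightarrow> x \<in> {1,3}" using exhaust_3[of x] d3 by auto
qed
lemma compl_3: "- {3::3} = {1,2}"
proof (rule set_eqI)
  fix x :: 3 show "x \<in> - {3} \<longleftrightarrow> x \<in> {1,2}" using exhaust_3[of x] d3 by auto
qed

lemma compl_single_3: "\<exists>x y. x \<noteq> y \<and> - {z::3} = {x, y}"
proof -
  have "z = 1 \<or> z = 2 \<or> z = 3" by (rule exhaust_3)
  then show ?thesis
  proof (elim disjE)
    assume "z = 1" then show ?thesis using compl_1 d3 by blast
  next
    assume "z = 2" then show ?thesis using compl_2 d3 by blast
  next
    assume "z = 3" then show ?thesis using compl_3 d3 by blast
  qed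
qed

lemma card_compl_single_3: "card (- {z::3}) = 2"
proof -
  obtain x y where "x \<noteq> y" "- {z} = {x, y}" using compl_single_3 by blast
  then show ?thesis by simp
qed

lemma card_UNIV_3: "card (UNIV :: 3 set) = 3" by simp

lemma set3_cases:
  fixes S :: "3 set"
  assumes "S \<noteq> {}"
  shows "(\<exists>x. S = {x}) \<or> (\<exists>z. S = - {z}) \<or> S = UNIV"
proof -
  show ?thesis
  proof (cases "1 \<in> S"; cases "2 \<in> S"; cases "3 \<in> S")
    assume "1 \<in> S" "2 \<in> S" "3 \<in> S" then have "S = UNIV" by (intro set_eqI) (metis exhaust_3 d3 insert_iff empty_iff UNIV_I)
    then show ?thesis by blast
  next
    assume "1 \<in> S" "2 \<in> S" "3 \<notin> S" then have "S = {1,2}" by (intro set_eqI) (metis exhaust_3 d3 insert_iff empty_iff UNIV_I)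
    then show ?thesis using compl_3 by metis
  next
    assume "1 \<in> S" "2 \<notin> S" "3 \<in> S" then have "S = {1,3}" by (intro set_eqI) (metis exhaust_3 d3 insert_iff empty_iff UNIV_I)
    then show ?thesis using compl_2 by metis
  next
    assume "1 \<in> S" "2 \<notin> S" "3 \<notin> S" then have "S = {1}" by (intro set_eqI) (metis exhaust_3 d3 insert_iff empty_iff UNIV_I)
    then show ?thesis by blast
  next
    assume "1 \<notin> S" "2 \<in> S" "3 \<in> S" then have "S = {2,3}" by (intro set_eqI) (metis exhaust_3 d3 insert_iff empty_iff UNIV_I)
    then show ?thesis using compl_1 by metis
  next
    assume "1 \<notin> S" "2 \<in> S" "3 \<notin> S" then have "S = {2}" by (intro set_eqI) (metis exhaust_3 d3 insert_iff empty_iff UNIV_I)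
    then show ?thesis by blast
  next
    assume "1 \<notin> S" "2 \<notin> S" "3 \<in> S" then have "S = {3}" by (intro set_eqI) (metis exhaust_3 d3 insert_iff empty_iff UNIV_I)
    then show ?thesis by blast
  next
    assume "1 \<notin> S" "2 \<notin> S" "3 \<notin> S" then have "S = {}" by (intro set_eqI) (metis exhaust_3 d3 insert_iff empty_iff UNIV_I)
    then show ?thesis using assms by blast
  qed
qed

lemma allsub_3:
  fixes M :: "'a::ring_1^3^3"
  shows "all_square_submatrices_invertible M \<longleftrightarrow>
    UU M \<and> (\<forall>z t. submatrix_invertible M (- {z}) (- {t})) \<and> invertible M"
proof
  assume A: "all_square_submatrices_invertible M"
  have "UU M" unfolding UU_def
  proof (intro allI)
    fix j k :: 3
    have "submatrix_invertible M {j} {k}" using A unfolding all_square_submatrices_invertible_def by auto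
    then show "is_unit_r (M $ j $ k)" by (simp add: sub_single_iff)
  qed
  moreover have "\<forall>z t. submatrix_invertible M (- {z}) (- {t})"
  proof (intro allI)
    fix z t :: 3
    have "- {z} \<noteq> {}" using card_compl_single_3[of z] by auto
    then show "submatrix_invertible M (- {z}) (- {t})"
      using A card_compl_single_3 unfolding all_square_submatrices_invertible_def by metis
  qed
  moreover have "invertible M"
    using A unfolding all_square_submatrices_invertible_def sub_UNIV_iff[symmetric] by auto
  ultimately show "UU M \<and> (\<forall>z t. submatrix_invertible M (- {z}) (- {t})) \<and> invertible M" by blast
next
  assume B: "UU M \<and> (\<forall>z t. submatrix_invertible M (- {z}) (- {t})) \<and> invertible M"
  show "all_square_submatrices_invertible M" unfolding all_square_submatrices_invertible_def
  proof (intro allI impI, elim conjE)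
    fix I K :: "3 set"
    assume ne: "I \<noteq> {}" and c: "card I = card K"
    have Kne: "K \<noteq> {}" using ne c by auto
    have c1: "card {x::3} = 1" for x by simp
    have c2: "card (- {z::3}) = 2" for z by (rule card_compl_single_3)
    have c3: "card (UNIV::3 set) = 3" by simp
    from set3_cases[OF ne] set3_cases[OF Kne]
    show "submatrix_invertible M I K"
    proof (elim disjE exE)
      fix x y assume "I = {x}" "K = {y}"
      then show ?thesis using B unfolding UU_def by (simp add: sub_single_iff)
    next
      fix z t assume "I = - {z}" "K = - {t}"
      then show ?thesis using B by simp
    next
      assume "I = UNIV" "K = UNIV" then show ?thesis using B by (simp add: sub_UNIV_iff)
    qed (use c c1 c2 c3 in \<open>simp_all\<close>)
  qed
qed

lemma sub2_inv:
  fixes M :: "'a::ring_1^'n::finite^'n"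
  assumes "invertible M"
  shows "submatrix_invertible M (- {z}) (- {t}) \<longleftrightarrow> is_unit_r (matrix_inv M $ t $ z)"
proof
  assume "submatrix_invertible M (- {z}) (- {t})"
  then have "submatrix_invertible M (- {z}) (- {t})" .
  then have "submatrix_invertible (matrix_inv M) {t} {z}"
    using jacobi_compl[of "matrix_inv M" M "{z}" "{t}"] matrix_inv_props[OF assms] by simp
  then show "is_unit_r (matrix_inv M $ t $ z)" by (simp add: sub_single_iff)
next
  assume "is_unit_r (matrix_inv M $ t $ z)"
  then have "submatrix_invertible (matrix_inv M) (- (- {t})) (- (- {z}))" by (simp add: sub_single_iff)
  then show "submatrix_invertible M (- {z}) (- {t})"
    using jacobi_compl[of M "matrix_inv M" "- {t}" "- {z}"] matrix_inv_props[OF assms] by simp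
qed

lemma sub2_J2:
  fixes M :: "'a::ring_1^3^3"
  assumes U: "UU M"
  shows "submatrix_invertible (J2m M) (- {z}) (- {t}) \<longleftrightarrow> submatrix_invertible M (- {t}) (- {z})"
proof -
  obtain x y where xy: "x \<noteq> y" "- {z} = {x, y}" using compl_single_3 by blast
  obtain u v where uv: "u \<noteq> v" "- {t} = {u, v}" using compl_single_3 by blast
  have "submatrix_invertible (J2m M) (- {z}) (- {t}) \<longleftrightarrow>
        inv2 (uinv (M$u$x)) (uinv (M$v$x)) (uinv (M$u$y)) (uinv (M$v$y))"
    unfolding xy(2) uv(2) using sub_pair_iff[OF xy(1) uv(1), of "J2m M"] by simp
  also have "\<dots> \<longleftrightarrow> inv2 (M$u$x) (M$u$y) (M$v$x) (M$v$y)"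
    using inv2_hinv_iff U unfolding UU_def by blast
  also have "\<dots> \<longleftrightarrow> submatrix_invertible M (- {t}) (- {z})"
    unfolding xy(2) uv(2) using sub_pair_iff[OF uv(1) xy(1), of M] by simp
  finally show ?thesis .
qed

lemma allsub_inv:
  fixes M :: "'a::ring_1^3^3"
  shows "all_square_submatrices_invertible M \<longleftrightarrow> UU M \<and> invertible M \<and> UU (matrix_inv M)"
proof -
  have "invertible M \<Longrightarrow> (\<forall>z t. submatrix_invertible M (- {z}) (- {t})) \<longleftrightarrow> UU (matrix_inv M)"
    using sub2_inv unfolding UU_def by blast
  then show ?thesis using allsub_3[of M] by blast
qed

lemma allsub_J2:
  fixes M :: "'a::ring_1^3^3"
  assumes "UU M" "invertible M"
  shows "all_square_submatrices_invertible (J2m M) \<longleftrightarrow> invertible (J2m M) \<and> UU (matrix_inv M)"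
proof -
  have "(\<forall>z t. submatrix_invertible (J2m M) (- {z}) (- {t})) \<longleftrightarrow> UU (matrix_inv M)"
    using sub2_J2[OF assms(1)] sub2_inv[OF assms(2)] unfolding UU_def by blast
  then show ?thesis using allsub_3[of "J2m M"] UU_J2m[OF assms(1)] by blast
qed

lemma schur_fwd:
  fixes a11 :: "'a::ring_1"
  assumes u: "is_unit_r a11"
  and r11: "a11*b11 + a12*b21 + a13*b31 = 1" and r12: "a11*b12 + a12*b22 + a13*b32 = 0"
  and r13: "a11*b13 + a12*b23 + a13*b33 = 0"
  and r22: "a21*b12 + a22*b22 + a23*b32 = 1" and r23: "a21*b13 + a22*b23 + a23*b33 = 0"
  and r32: "a31*b12 + a32*b22 + a33*b32 = 0" and r33: "a31*b13 + a32*b23 + a33*b33 = 1"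
  and l21: "b21*a11 + b22*a21 + b23*a31 = 0" and l31: "b31*a11 + b32*a21 + b33*a31 = 0"
  and l22: "b21*a12 + b22*a22 + b23*a32 = 1" and l23: "b21*a13 + b22*a23 + b23*a33 = 0"
  and l32: "b31*a12 + b32*a22 + b33*a32 = 0" and l33: "b31*a13 + b32*a23 + b33*a33 = 1"
  shows "inv2 (a22 - a21 * uinv a11 * a12) (a23 - a21 * uinv a11 * a13)
              (a32 - a31 * uinv a11 * a12) (a33 - a31 * uinv a11 * a13)"
proof -
  let ?i = "uinv a11"
  have y12: "b12 = - (?i * (a12*b22 + a13*b32))"
  proof -
    have "?i * (a11*b12 + a12*b22 + a13*b32) = 0" using r12 by simp
    then show ?thesis using u by (simp add: algebra_simps eq_neg_iff_add_eq_0)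
  qed
  have y13: "b13 = - (?i * (a12*b23 + a13*b33))"
  proof -
    have "?i * (a11*b13 + a12*b23 + a13*b33) = 0" using r13 by simp
    then show ?thesis using u by (simp add: algebra_simps eq_neg_iff_add_eq_0)
  qed
  have y21: "b21 = - ((b22*a21 + b23*a31) * ?i)"
  proof -
    have "(b21*a11 + b22*a21 + b23*a31) * ?i = 0" using l21 by simp
    then show ?thesis using u by (simp add: algebra_simps eq_neg_iff_add_eq_0 mult.assoc)
  qed
  have y31: "b31 = - ((b32*a21 + b33*a31) * ?i)"
  proof -
    have "(b31*a11 + b32*a21 + b33*a31) * ?i = 0" using l31 by simp
    then show ?thesis using u by (simp add: algebra_simps eq_neg_iff_add_eq_0 mult.assoc)
  qed
  show ?thesis unfolding inv2_def
  proof (intro exI conjI)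
    show "(a22 - a21 * ?i * a12) * b22 + (a23 - a21 * ?i * a13) * b32 = 1"
      using r22 unfolding y12 by (simp add: algebra_simps)
    show "(a22 - a21 * ?i * a12) * b23 + (a23 - a21 * ?i * a13) * b33 = 0"
      using r23 unfolding y13 by (simp add: algebra_simps)
    show "(a32 - a31 * ?i * a12) * b22 + (a33 - a31 * ?i * a13) * b32 = 0"
      using r32 unfolding y12 by (simp add: algebra_simps)
    show "(a32 - a31 * ?i * a12) * b23 + (a33 - a31 * ?i * a13) * b33 = 1"
      using r33 unfolding y13 by (simp add: algebra_simps)
    show "b22 * (a22 - a21 * ?i * a12) + b23 * (a32 - a31 * ?i * a12) = 1"
      using l22 unfolding y21 by (simp add: algebra_simps)
    show "b22 * (a23 - a21 * ?i * a13) + b23 * (a33 - a31 * ?i * a13) = 0"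
      using l23 unfolding y21 by (simp add: algebra_simps)
    show "b32 * (a22 - a21 * ?i * a12) + b33 * (a32 - a31 * ?i * a12) = 0"
      using l32 unfolding y31 by (simp add: algebra_simps)
    show "b32 * (a23 - a21 * ?i * a13) + b33 * (a33 - a31 * ?i * a13) = 1"
      using l33 unfolding y31 by (simp add: algebra_simps)
  qed
qed

lemma schur_bwd:
  fixes xaa xab xac xba xbb xbc xca xcb xcc e f g h :: "'a::ring_1"
  assumes u: "is_unit_r xaa"
  defines "i \<equiv> uinv xaa"
  defines "q22 \<equiv> xbb - xba * i * xab" and "q23 \<equiv> xbc - xba * i * xac"
      and "q32 \<equiv> xcb - xca * i * xab" and "q33 \<equiv> xcc - xca * i * xac"
  assumes H1: "q22*e + q23*g = 1" and H2: "q22*f + q23*h = 0" and H3: "q32*e + q33*g = 0"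
      and H4: "q32*f + q33*h = 1" and H5: "e*q22 + f*q32 = 1" and H6: "e*q23 + f*q33 = 0"
      and H7: "g*q22 + h*q32 = 0" and H8: "g*q23 + h*q33 = 1"
  defines "b12 \<equiv> - (i * (xab*e + xac*g))" and "b13 \<equiv> - (i * (xab*f + xac*h))"
      and "b21 \<equiv> - ((e*xba + f*xca) * i)" and "b31 \<equiv> - ((g*xba + h*xca) * i)"
  defines "b11 \<equiv> i - i * (xab*b21 + xac*b31)"
  shows "xaa*b11 + xab*b21 + xac*b31 = 1" "xaa*b12 + xab*e + xac*g = 0" "xaa*b13 + xab*f + xac*h = 0"
        "xba*b11 + xbb*b21 + xbc*b31 = 0" "xba*b12 + xbb*e + xbc*g = 1" "xba*b13 + xbb*f + xbc*h = 0"
        "xca*b11 + xcb*b21 + xcc*b31 = 0" "xca*b12 + xcb*e + xcc*g = 0" "xca*b13 + xcb*f + xcc*h = 1"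
        "b11*xaa + b12*xba + b13*xca = 1" "b11*xab + b12*xbb + b13*xcb = 0" "b11*xac + b12*xbc + b13*xcc = 0"
        "b21*xaa + e*xba + f*xca = 0" "b21*xab + e*xbb + f*xcb = 1" "b21*xac + e*xbc + f*xcc = 0"
        "b31*xaa + g*xba + h*xca = 0" "b31*xab + g*xbb + h*xcb = 0" "b31*xac + g*xbc + h*xcc = 1"
proof -
  have ui: "is_unit_r i" "xaa * i = 1" "i * xaa = 1" using u unfolding i_def by simp_all
  have c1: "xaa * (i * z) = z" "i * (xaa * z) = z" for z using ui by (simp_all add: mult.assoc[symmetric])
  note cc = ui(2,3) c1
  show "xaa*b11 + xab*b21 + xac*b31 = 1"
    unfolding b11_def by (simp add: algebra_simps cc)
  show "xaa*b12 + xab*e + xac*g = 0" unfolding b12_def by (simp add: algebra_simps cc)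
  show "xaa*b13 + xab*f + xac*h = 0" unfolding b13_def by (simp add: algebra_simps cc)
  have "xba*b11 + xbb*b21 + xbc*b31 = xba*i - (q22*e + q23*g)*(xba*i) - (q22*f + q23*h)*(xca*i)"
    unfolding b11_def b21_def b31_def q22_def q23_def by (simp add: algebra_simps)
  then show "xba*b11 + xbb*b21 + xbc*b31 = 0" using H1 H2 by simp
  show "xba*b12 + xbb*e + xbc*g = 1" using H1 unfolding b12_def q22_def q23_def by (simp add: algebra_simps)
  show "xba*b13 + xbb*f + xbc*h = 0" using H2 unfolding b13_def q22_def q23_def by (simp add: algebra_simps)
  have "xca*b11 + xcb*b21 + xcc*b31 = xca*i - (q32*e + q33*g)*(xba*i) - (q32*f + q33*h)*(xca*i)"
    unfolding b11_def b21_def b31_def q32_def q33_def by (simp add: algebra_simps)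
  then show "xca*b11 + xcb*b21 + xcc*b31 = 0" using H3 H4 by simp
  show "xca*b12 + xcb*e + xcc*g = 0" using H3 unfolding b12_def q32_def q33_def by (simp add: algebra_simps)
  show "xca*b13 + xcb*f + xcc*h = 1" using H4 unfolding b13_def q32_def q33_def by (simp add: algebra_simps)
  show "b11*xaa + b12*xba + b13*xca = 1"
    unfolding b11_def b12_def b13_def b21_def b31_def by (simp add: algebra_simps cc)
  have "b11*xab + b12*xbb + b13*xcb = i*xab - i*xab*(e*q22 + f*q32) - i*xac*(g*q22 + h*q32)"
    unfolding b11_def b12_def b13_def b21_def b31_def q22_def q32_def by (simp add: algebra_simps)
  then show "b11*xab + b12*xbb + b13*xcb = 0" using H5 H7 by simp
  have "b11*xac + b12*xbc + b13*xcc = i*xac - i*xab*(e*q23 + f*q33) - i*xac*(g*q23 + h*q33)"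
    unfolding b11_def b12_def b13_def b21_def b31_def q23_def q33_def by (simp add: algebra_simps)
  then show "b11*xac + b12*xbc + b13*xcc = 0" using H6 H8 by simp
  show "b21*xaa + e*xba + f*xca = 0" unfolding b21_def by (simp add: algebra_simps cc)
  show "b21*xab + e*xbb + f*xcb = 1" using H5 unfolding b21_def q22_def q32_def by (simp add: algebra_simps)
  show "b21*xac + e*xbc + f*xcc = 0" using H6 unfolding b21_def q23_def q33_def by (simp add: algebra_simps)
  show "b31*xaa + g*xba + h*xca = 0" unfolding b31_def by (simp add: algebra_simps cc)
  show "b31*xab + g*xbb + h*xcb = 0" using H7 unfolding b31_def q22_def q32_def by (simp add: algebra_simps)
  show "b31*xac + g*xbc + h*xcc = 1" using H8 unfolding b31_def q23_def q33_def by (simp add: algebra_simps)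
qed

lemma mat_eq_3:
  fixes A B :: "'a::ring_1^3^3"
  shows "A = B \<longleftrightarrow> (A$1$1 = B$1$1 \<and> A$1$2 = B$1$2 \<and> A$1$3 = B$1$3 \<and>
                    A$2$1 = B$2$1 \<and> A$2$2 = B$2$2 \<and> A$2$3 = B$2$3 \<and>
                    A$3$1 = B$3$1 \<and> A$3$2 = B$3$2 \<and> A$3$3 = B$3$3)"
  by (auto simp: vec_eq_iff forall_3)

lemma mm3: "((A::'a::ring_1^3^3) ** B) $ i $ j = A$i$1 * B$1$j + A$i$2 * B$2$j + A$i$3 * B$3$j"
  by (simp add: mm_entry sum_3)

lemma schur3:
  fixes X :: "'a::ring_1^3^3"
  assumes u: "is_unit_r (X$1$1)"
  defines "s \<equiv> \<lambda>i j. X$i$j - X$i$1 * uinv (X$1$1) * X$1$j"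
  shows "invertible X \<longleftrightarrow> inv2 (s 2 2) (s 2 3) (s 3 2) (s 3 3)"
proof
  assume "invertible X"
  then obtain Y where XY: "X ** Y = mat 1" "Y ** X = mat 1" unfolding invertible_def by blast
  have e1: "(X ** Y)$i$j = (if i = j then 1 else 0)" "(Y ** X)$i$j = (if i = j then 1 else 0)" for i j
    using XY by (simp_all add: mat1_entry)
  note E = e1[unfolded mm3]
  have r11: "X$1$1 * Y$1$1 + X$1$2 * Y$2$1 + X$1$3 * Y$3$1 = 1" using E(1)[of 1 1] d3 by simp
  have r12: "X$1$1 * Y$1$2 + X$1$2 * Y$2$2 + X$1$3 * Y$3$2 = 0" using E(1)[of 1 2] d3 by simp
  have r13: "X$1$1 * Y$1$3 + X$1$2 * Y$2$3 + X$1$3 * Y$3$3 = 0" using E(1)[of 1 3] d3 by simp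
  have r22: "X$2$1 * Y$1$2 + X$2$2 * Y$2$2 + X$2$3 * Y$3$2 = 1" using E(1)[of 2 2] d3 by simp
  have r23: "X$2$1 * Y$1$3 + X$2$2 * Y$2$3 + X$2$3 * Y$3$3 = 0" using E(1)[of 2 3] d3 by simp
  have r32: "X$3$1 * Y$1$2 + X$3$2 * Y$2$2 + X$3$3 * Y$3$2 = 0" using E(1)[of 3 2] d3 by simp
  have r33: "X$3$1 * Y$1$3 + X$3$2 * Y$2$3 + X$3$3 * Y$3$3 = 1" using E(1)[of 3 3] d3 by simp
  have l21: "Y$2$1 * X$1$1 + Y$2$2 * X$2$1 + Y$2$3 * X$3$1 = 0" using E(2)[of 2 1] d3 by simp
  have l31: "Y$3$1 * X$1$1 + Y$3$2 * X$2$1 + Y$3$3 * X$3$1 = 0" using E(2)[of 3 1] d3 by simp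
  have l22: "Y$2$1 * X$1$2 + Y$2$2 * X$2$2 + Y$2$3 * X$3$2 = 1" using E(2)[of 2 2] d3 by simp
  have l23: "Y$2$1 * X$1$3 + Y$2$2 * X$2$3 + Y$2$3 * X$3$3 = 0" using E(2)[of 2 3] d3 by simp
  have l32: "Y$3$1 * X$1$2 + Y$3$2 * X$2$2 + Y$3$3 * X$3$2 = 0" using E(2)[of 3 2] d3 by simp
  have l33: "Y$3$1 * X$1$3 + Y$3$2 * X$2$3 + Y$3$3 * X$3$3 = 1" using E(2)[of 3 3] d3 by simp
  show "inv2 (s 2 2) (s 2 3) (s 3 2) (s 3 3)" unfolding s_def
    by (rule schur_fwd[OF u r11 r12 r13 r22 r23 r32 r33 l21 l31 l22 l23 l32 l33])
next
  assume "inv2 (s 2 2) (s 2 3) (s 3 2) (s 3 3)"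
  then obtain e f g h where H: "s 2 2*e + s 2 3*g = 1" "s 2 2*f + s 2 3*h = 0" "s 3 2*e + s 3 3*g = 0"
      "s 3 2*f + s 3 3*h = 1" "e* s 2 2 + f* s 3 2 = 1" "e* s 2 3 + f* s 3 3 = 0"
      "g* s 2 2 + h* s 3 2 = 0" "g* s 2 3 + h* s 3 3 = 1"
    unfolding inv2_def by blast
  note B = schur_bwd[OF u, where xab="X$1$2" and xac="X$1$3" and xba="X$2$1" and xbb="X$2$2"
      and xbc="X$2$3" and xca="X$3$1" and xcb="X$3$2" and xcc="X$3$3" and e=e and f=f and g=g and h=h,
      OF H[unfolded s_def]]
  let ?i = "uinv (X$1$1)"
  let ?b12 = "- (?i * (X$1$2*e + X$1$3*g))" and ?b13 = "- (?i * (X$1$2*f + X$1$3*h))"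
  let ?b21 = "- ((e*X$2$1 + f*X$3$1) * ?i)" and ?b31 = "- ((g*X$2$1 + h*X$3$1) * ?i)"
  let ?b11 = "?i - ?i * (X$1$2 * ?b21 + X$1$3 * ?b31)"
  let ?Y = "vector [vector [?b11, ?b12, ?b13], vector [?b21, e, f], vector [?b31, g, h]] :: 'a^3^3"
  have "X ** ?Y = mat 1" "?Y ** X = mat 1"
    unfolding mat_eq_3 mm3 using B by (simp_all add: mat1_entry d3)
  then show "invertible X" unfolding invertible_def by blast
qed

lemma tau_left:
  fixes A B C D E F p q r s t u :: "'a::ring_1"
  assumes uF: "is_unit_r F" and ut: "is_unit_r t"
  and e1: "A*p + B*q + C*r = 1" and e2: "D*p + E*q + F*r = 0"
  and e3: "A* s + B*t + C*u = 0" and e4: "D* s + E*t + F*u = 0"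
  shows "(A - C * uinv F * D) * (p - s * uinv t * q) = 1"
proof -
  have r: "r = - (uinv F * (D*p + E*q))"
  proof -
    have "uinv F * (D*p + E*q + F*r) = 0" using e2 by simp
    then show ?thesis using uF by (simp add: algebra_simps eq_neg_iff_add_eq_0)
  qed
  have u: "u = - (uinv F * (D* s + E*t))"
  proof -
    have "uinv F * (D* s + E*t + F*u) = 0" using e4 by simp
    then show ?thesis using uF by (simp add: algebra_simps eq_neg_iff_add_eq_0)
  qed
  have f1: "(A - C * uinv F * D) * p + (B - C * uinv F * E) * q = 1"
    using e1 unfolding r by (simp add: algebra_simps)
  have f2: "(A - C * uinv F * D) * s + (B - C * uinv F * E) * t = 0"
    using e3 unfolding u by (simp add: algebra_simps)
  have rho: "B - C * uinv F * E = - ((A - C * uinv F * D) * s * uinv t)"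
  proof -
    have "((A - C * uinv F * D) * s + (B - C * uinv F * E) * t) * uinv t = 0" using f2 by simp
    then show ?thesis using ut by (simp add: algebra_simps eq_neg_iff_add_eq_0 mult.assoc)
  qed
  show ?thesis using f1 unfolding rho by (simp add: algebra_simps)
qed

lemma tau_right:
  fixes A C D F G H p q s t x y :: "'a::ring_1"
  assumes uF: "is_unit_r F" and ut: "is_unit_r t"
  and e1: "p*A + s*G + x*D = 1" and e2: "q*A + t*G + y*D = 0"
  and e3: "p*C + s*H + x*F = 0" and e4: "q*C + t*H + y*F = 0"
  shows "(p - s * uinv t * q) * (A - C * uinv F * D) = 1"
proof -
  have G: "G = - (uinv t * (q*A + y*D))"
  proof -
    have "uinv t * (q*A + t*G + y*D) = 0" using e2 by simp
    then show ?thesis using ut by (simp add: algebra_simps eq_neg_iff_add_eq_0)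
  qed
  have H: "H = - (uinv t * (q*C + y*F))"
  proof -
    have "uinv t * (q*C + t*H + y*F) = 0" using e4 by simp
    then show ?thesis using ut by (simp add: algebra_simps eq_neg_iff_add_eq_0)
  qed
  have f1: "(p - s * uinv t * q) * A + (x - s * uinv t * y) * D = 1"
    using e1 unfolding G by (simp add: algebra_simps)
  have f2: "(p - s * uinv t * q) * C + (x - s * uinv t * y) * F = 0"
    using e3 unfolding H by (simp add: algebra_simps)
  have psi: "x - s * uinv t * y = - ((p - s * uinv t * q) * C * uinv F)"
  proof -
    have "((p - s * uinv t * q) * C + (x - s * uinv t * y) * F) * uinv F = 0" using f2 by simp
    then show ?thesis using uF by (simp add: algebra_simps eq_neg_iff_add_eq_0 mult.assoc)
  qed
  show ?thesis using f1 unfolding psi by (simp add: algebra_simps)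
qed

lemma univ3_distinct:
  fixes x y z :: 3
  assumes "x \<noteq> y" "x \<noteq> z" "y \<noteq> z"
  shows "UNIV = {x, y, z}"
proof -
  have "card {x, y, z} = 3" using assms by simp
  then show ?thesis by (metis card_UNIV_3 card_subset_eq finite subset_UNIV)
qed

lemma sum3_distinct:
  fixes x y z :: 3
  assumes "x \<noteq> y" "x \<noteq> z" "y \<noteq> z"
  shows "sum f UNIV = f x + f y + f z"
  using assms by (simp add: univ3_distinct[OF assms] add.assoc)

lemma tau_inv:
  fixes M W :: "'a::ring_1^3^3"
  assumes MW: "M ** W = mat 1" and WM: "W ** M = mat 1"
  and r: "r1 \<noteq> r2" "r1 \<noteq> r3" "r2 \<noteq> r3" and c: "c1 \<noteq> c2" "c1 \<noteq> c3" "c2 \<noteq> c3"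
  and u1: "is_unit_r (W$r2$c2)" and u2: "is_unit_r (M$c3$r3)"
  shows "(M$c1$r1 - M$c1$r3 * uinv (M$c3$r3) * M$c3$r1) * (W$r1$c1 - W$r1$c2 * uinv (W$r2$c2) * W$r2$c1) = 1"
    "(W$r1$c1 - W$r1$c2 * uinv (W$r2$c2) * W$r2$c1) * (M$c1$r1 - M$c1$r3 * uinv (M$c3$r3) * M$c3$r1) = 1"
proof -
  have mw: "M$i$r1 * W$r1$j + M$i$r2 * W$r2$j + M$i$r3 * W$r3$j = (if i = j then 1 else 0)" for i j
  proof -
    have "(M ** W)$i$j = (if i = j then 1 else 0)" using MW by (simp add: mat1_entry)
    then show ?thesis unfolding mm_entry sum3_distinct[OF r] .
  qed
  have wm: "W$i$c1 * M$c1$j + W$i$c2 * M$c2$j + W$i$c3 * M$c3$j = (if i = j then 1 else 0)" for i j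
  proof -
    have "(W ** M)$i$j = (if i = j then 1 else 0)" using WM by (simp add: mat1_entry)
    then show ?thesis unfolding mm_entry sum3_distinct[OF c] .
  qed
  show "(M$c1$r1 - M$c1$r3 * uinv (M$c3$r3) * M$c3$r1) * (W$r1$c1 - W$r1$c2 * uinv (W$r2$c2) * W$r2$c1) = 1"
    by (rule tau_left[OF u2 u1]) (use mw[of c1 c1] mw[of c3 c1] mw[of c1 c2] mw[of c3 c2] c in simp_all)
  show "(W$r1$c1 - W$r1$c2 * uinv (W$r2$c2) * W$r2$c1) * (M$c1$r1 - M$c1$r3 * uinv (M$c3$r3) * M$c3$r1) = 1"
    by (rule tau_right[OF u2 u1]) (use wm[of r1 r1] wm[of r2 r1] wm[of r1 r3] wm[of r2 r3] r in simp_all)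
qed

lemma schur_entry:
  fixes a b c d :: "'a::ring_1"
  assumes "is_unit_r a" "is_unit_r b" "is_unit_r c" "is_unit_r d"
  shows "uinv c - uinv a * uinv (uinv b) * uinv d = - (uinv a * (b - a * uinv c * d) * uinv d)"
proof -
  have "uinv a * (b - a * uinv c * d) * uinv d = uinv a * b * uinv d - (uinv a * a) * uinv c * (d * uinv d)"
    by (simp add: algebra_simps)
  also have "\<dots> = uinv a * b * uinv d - uinv c" using assms by simp
  finally show ?thesis using assms by simp
qed

lemma key_iff:
  fixes M :: "'a::ring_1^3^3"
  assumes invM: "invertible M" and UM: "UU M" and UW: "UU (matrix_inv M)"
  shows "invertible (J2m M) \<longleftrightarrow> invertible (J2m (matrix_inv M))"
proof -
  define W where "W = matrix_inv M"
  have MW: "M ** W = mat 1" and WM: "W ** M = mat 1" using matrix_inv_props[OF invM] unfolding W_def by auto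
  have um: "is_unit_r (M$i$j)" for i j using UM unfolding UU_def by blast
  have uw: "is_unit_r (W$i$j)" for i j using UW unfolding UU_def W_def by blast
  define T22 where "T22 = M$1$1 - M$1$3 * uinv (M$3$3) * M$3$1"
  define T23 where "T23 = M$1$1 - M$1$2 * uinv (M$3$2) * M$3$1"
  define T32 where "T32 = M$1$1 - M$1$3 * uinv (M$2$3) * M$2$1"
  define T33 where "T33 = M$1$1 - M$1$2 * uinv (M$2$2) * M$2$1"
  have i22: "T22 * (W$1$1 - W$1$2 * uinv (W$2$2) * W$2$1) = 1" "(W$1$1 - W$1$2 * uinv (W$2$2) * W$2$1) * T22 = 1"
    using tau_inv[OF MW WM, of 1 2 3 1 2 3, OF d3(1) d3(2) d3(3) d3(1) d3(2) d3(3) uw um] unfolding T22_def by auto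
  have i23: "T23 * (W$1$1 - W$1$2 * uinv (W$3$2) * W$3$1) = 1" "(W$1$1 - W$1$2 * uinv (W$3$2) * W$3$1) * T23 = 1"
    using tau_inv[OF MW WM, of 1 3 2 1 2 3, OF d3(2) d3(1) d3(6) d3(1) d3(2) d3(3) uw um] unfolding T23_def by auto
  have i32: "T32 * (W$1$1 - W$1$3 * uinv (W$2$3) * W$2$1) = 1" "(W$1$1 - W$1$3 * uinv (W$2$3) * W$2$1) * T32 = 1"
    using tau_inv[OF MW WM, of 1 2 3 1 3 2, OF d3(1) d3(2) d3(3) d3(2) d3(1) d3(6) uw um] unfolding T32_def by auto
  have i33: "T33 * (W$1$1 - W$1$3 * uinv (W$3$3) * W$3$1) = 1" "(W$1$1 - W$1$3 * uinv (W$3$3) * W$3$1) * T33 = 1"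
    using tau_inv[OF MW WM, of 1 3 2 1 3 2, OF d3(2) d3(1) d3(6) d3(2) d3(1) d3(6) uw um] unfolding T33_def by auto
  have uT: "is_unit_r T22" "is_unit_r T23" "is_unit_r T32" "is_unit_r T33"
    using i22 i23 i32 i33 unit_inv_eq by blast+
  have vT: "uinv T22 = W$1$1 - W$1$2 * uinv (W$2$2) * W$2$1" "uinv T23 = W$1$1 - W$1$2 * uinv (W$3$2) * W$3$1"
    "uinv T32 = W$1$1 - W$1$3 * uinv (W$2$3) * W$2$1" "uinv T33 = W$1$1 - W$1$3 * uinv (W$3$3) * W$3$1"
    using i22 i23 i32 i33 unit_inv_eq by blast+
  have uQ: "is_unit_r (J2m M $ 1 $ 1)" using um by simp
  have uA: "is_unit_r (J2m W $ 1 $ 1)" using uw by simp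
  have sQ: "invertible (J2m M) \<longleftrightarrow>
      inv2 (- (uinv (M$1$2) * T33 * uinv (M$2$1))) (- (uinv (M$1$2) * T23 * uinv (M$3$1)))
           (- (uinv (M$1$3) * T32 * uinv (M$2$1))) (- (uinv (M$1$3) * T22 * uinv (M$3$1)))"
  proof -
    have e: "J2m M $ i $ j - J2m M $ i $ 1 * uinv (J2m M $ 1 $ 1) * J2m M $ 1 $ j
        = - (uinv (M$1$i) * (M$1$1 - M$1$i * uinv (M$j$i) * M$j$1) * uinv (M$j$1))" for i j
      using schur_entry[OF um um um um] by simp
    show ?thesis unfolding schur3[OF uQ] e T22_def T23_def T32_def T33_def ..
  qed
  have sA: "invertible (J2m W) \<longleftrightarrow>
      inv2 (- (uinv (W$1$2) * uinv T22 * uinv (W$2$1))) (- (uinv (W$1$2) * uinv T23 * uinv (W$3$1)))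
           (- (uinv (W$1$3) * uinv T32 * uinv (W$2$1))) (- (uinv (W$1$3) * uinv T33 * uinv (W$3$1)))"
  proof -
    have e: "J2m W $ i $ j - J2m W $ i $ 1 * uinv (J2m W $ 1 $ 1) * J2m W $ 1 $ j
        = - (uinv (W$1$i) * (W$1$1 - W$1$i * uinv (W$j$i) * W$j$1) * uinv (W$j$1))" for i j
      using schur_entry[OF uw uw uw uw] by simp
    show ?thesis unfolding schur3[OF uA] e vT ..
  qed
  have "invertible (J2m M) \<longleftrightarrow> inv2 T33 T23 T32 T22"
    unfolding sQ inv2_neg_iff
    using inv2_scale_iff[of "uinv (M$1$2)" "uinv (M$1$3)" "uinv (M$2$1)" "uinv (M$3$1)" T33 T23 T32 T22] um by simp
  also have "\<dots> \<longleftrightarrow> inv2 T22 T32 T23 T33" by (rule inv2_swap_iff)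
  also have "\<dots> \<longleftrightarrow> inv2 (uinv T22) (uinv T23) (uinv T32) (uinv T33)"
    using inv2_hinv_iff[OF uT(1) uT(3) uT(2) uT(4)] by simp
  also have "\<dots> \<longleftrightarrow> invertible (J2m W)"
    unfolding sA inv2_neg_iff
    using inv2_scale_iff[of "uinv (W$1$2)" "uinv (W$1$3)" "uinv (W$2$1)" "uinv (W$3$1)" "uinv T22" "uinv T23" "uinv T32" "uinv T33"] uw by simp
  finally show ?thesis unfolding W_def .
qed

definition core :: "'a::ring_1^3^3 \<Rightarrow> bool" where
  "core M \<longleftrightarrow> UU M \<and> invertible M \<and> UU (matrix_inv M) \<and> invertible (J2m M)"

lemma UU_inv_J2:
  fixes W :: "'a::ring_1^3^3"
  assumes UW: "UU W" and iW: "invertible W" and iA: "invertible (J2m W)"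
  shows "UU (matrix_inv (J2m W)) \<longleftrightarrow> UU (matrix_inv W)"
proof -
  have "is_unit_r (matrix_inv (J2m W) $ t $ z) \<longleftrightarrow> is_unit_r (matrix_inv W $ z $ t)" for z t
  proof -
    have "is_unit_r (matrix_inv (J2m W) $ t $ z) \<longleftrightarrow> submatrix_invertible (J2m W) (- {z}) (- {t})"
      using sub2_inv[OF iA] by simp
    also have "\<dots> \<longleftrightarrow> submatrix_invertible W (- {t}) (- {z})" by (rule sub2_J2[OF UW])
    also have "\<dots> \<longleftrightarrow> is_unit_r (matrix_inv W $ z $ t)" by (rule sub2_inv[OF iW])
    finally show ?thesis .
  qed
  then show ?thesis unfolding UU_def by blast
qed

lemma core_step:
  fixes M :: "'a::ring_1^3^3"
  assumes "core M"
  shows "core (J2m (matrix_inv M))"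
proof -
  define W where "W = matrix_inv M"
  have UM: "UU M" and iM: "invertible M" and UW: "UU W" and iQ: "invertible (J2m M)"
    using assms unfolding core_def W_def by auto
  have iW: "invertible W" and WW: "matrix_inv W = M" using matrix_inv_inv[OF iM] unfolding W_def by auto
  have iA: "invertible (J2m W)" using key_iff[OF iM UM] UW iQ unfolding W_def by blast
  have "UU (J2m W)" by (rule UU_J2m[OF UW])
  moreover have "UU (matrix_inv (J2m W))" using UU_inv_J2[OF UW iW iA] WW UM by simp
  moreover have "invertible (J2m (J2m W))" using J2m_J2m[OF UW] iW by simp
  ultimately show ?thesis using iA unfolding core_def W_def by blast
qed

lemma dom2_core:
  fixes M :: "'a::ring_1^3^3"
  assumes iM: "invertible M" and UW: "UU (matrix_inv M)"
    and iA: "invertible (J2m (matrix_inv M))" and UA: "UU (matrix_inv (J2m (matrix_inv M)))"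
  shows "core M"
proof -
  define W where "W = matrix_inv M"
  have iW: "invertible W" and WW: "matrix_inv W = M" using matrix_inv_inv[OF iM] unfolding W_def by auto
  have UM: "UU M" using UU_inv_J2[of W] UW iW iA UA WW unfolding W_def by simp
  have "invertible (J2m M)" using key_iff[OF iW] UW UM WW iA unfolding W_def by simp
  then show ?thesis using UM iM UW unfolding core_def by blast
qed

lemma Jmap_eq:
  "Jmap M = (if invertible M \<and> UU (matrix_inv M) then Some (J2m (matrix_inv M)) else None)"
  unfolding Jmap_def pcomp_def J1_def J2_eq by simp

lemma Jinvmap_eq:
  "Jinvmap M = (if UU M \<and> invertible (J2m M) then Some (matrix_inv (J2m M)) else None)"
  unfolding Jinvmap_def pcomp_def J1_def J2_eq by simp

lemma Jpow_Suc_eq: "Jpow (Suc n) M = (case Jpow n M of None \<Rightarrow> None | Some y \<Rightarrow> Jmap y)"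
  by (simp add: pcomp_def)

lemma Jpow_core:
  fixes M :: "'a::ring_1^3^3"
  assumes "core M"
  shows "\<exists>X. Jpow n M = Some X \<and> core X"
proof (induction n)
  case 0 then show ?case using assms by simp
next
  case (Suc n)
  then obtain X where X: "Jpow n M = Some X" "core X" by blast
  then have "Jmap X = Some (J2m (matrix_inv X))" unfolding Jmap_eq core_def by simp
  then show ?case using X core_step[OF X(2)] by (simp add: pcomp_def)
qed

lemma Jpow_le:
  assumes "Jpow n M \<noteq> None" "m \<le> n"
  shows "Jpow m M \<noteq> None"
  using assms
proof (induction n)
  case 0 then show ?case by simp
next
  case (Suc n)
  show ?case
  proof (cases "m = Suc n")
    case True then show ?thesis using Suc by simp
  next
    case False
    then have "m \<le> n" using Suc by simp
    moreover have "Jpow n M \<noteq> None" using Suc.prems(1) by (auto simp: pcomp_def split: option.splits)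
    ultimately show ?thesis using Suc.IH by blast
  qed
qed

lemma Jpow2_core:
  fixes M :: "'a::ring_1^3^3"
  assumes "Jpow 2 M \<noteq> None"
  shows "core M"
proof -
  have e: "Jpow 2 M = (case Jmap M of None \<Rightarrow> None | Some y \<Rightarrow> Jmap y)"
    by (simp add: numeral_2_eq_2 Jpow_Suc_eq pcomp_def)
  obtain y where y: "Jmap M = Some y" "Jmap y \<noteq> None" using assms unfolding e by (auto split: option.splits)
  have 1: "invertible M" "UU (matrix_inv M)" "y = J2m (matrix_inv M)"
    using y(1) unfolding Jmap_eq by (auto split: if_splits)
  have 2: "invertible y" "UU (matrix_inv y)" using y(2) unfolding Jmap_eq by (auto split: if_splits)
  show ?thesis using dom2_core[OF 1(1,2)] 2 1(3) by simp
qed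

lemma pdom_Jpow:
  fixes n :: nat
  assumes "2 \<le> n"
  shows "pdom (Jpow n :: 'a::ring_1^3^3 \<Rightarrow> _) = {M. core M}"
proof (intro set_eqI iffI)
  fix M :: "'a^3^3"
  assume "M \<in> pdom (Jpow n)"
  then have "Jpow n M \<noteq> None" unfolding pdom_def by simp
  then have "Jpow 2 M \<noteq> None" using Jpow_le assms by blast
  then show "M \<in> {M. core M}" using Jpow2_core by blast
next
  fix M :: "'a^3^3"
  assume "M \<in> {M. core M}"
  then show "M \<in> pdom (Jpow n)" using Jpow_core[of M n] unfolding pdom_def by auto
qed

lemma pdom_JJ:
  "pdom (Jmap :: 'a::ring_1^3^3 \<Rightarrow> _) \<inter> pdom Jinvmap = {M. core M}"
  unfolding pdom_def Jmap_eq Jinvmap_eq core_def by auto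

lemma core_iff_sub:
  fixes M :: "'a::ring_1^3^3"
  shows "core M \<longleftrightarrow> (\<exists>N. J2 M = Some N \<and> all_square_submatrices_invertible M
                 \<and> all_square_submatrices_invertible N)"
proof
  assume c: "core M"
  then have UM: "UU M" and iM: "invertible M" unfolding core_def by auto
  show "\<exists>N. J2 M = Some N \<and> all_square_submatrices_invertible M \<and> all_square_submatrices_invertible N"
    using c allsub_inv[of M] allsub_J2[OF UM iM] UM unfolding core_def J2_eq by auto
next
  assume "\<exists>N. J2 M = Some N \<and> all_square_submatrices_invertible M \<and> all_square_submatrices_invertible N"
  then obtain N where N: "J2 M = Some N" "all_square_submatrices_invertible M" "all_square_submatrices_invertible N"
    by blast
  have UM: "UU M" and NN: "N = J2m M" using N(1) unfolding J2_eq by (auto split: if_splits)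
  have iM: "invertible M" "UU (matrix_inv M)" using N(2) allsub_inv by blast+
  show "core M" using N(3) allsub_J2[OF UM iM(1)] UM iM NN unfolding core_def by blast
qed

theorem proposition1:
  shows "(\<forall>n m. 2 \<le> n \<and> 2 \<le> m \<longrightarrow>
            pdom (Jpow n :: 'a::ring_1^3^3 \<Rightarrow> _) = pdom (Jpow m :: 'a^3^3 \<Rightarrow> _)) \<and>
         (\<forall>n\<ge>2. pdom (Jpow n :: 'a^3^3 \<Rightarrow> _) = pdom Jmap \<inter> pdom Jinvmap) \<and>
         (\<forall>n\<ge>2. \<forall>M :: 'a^3^3. M \<in> pdom (Jpow n) \<longleftrightarrow>
            (\<exists>N. J2 M = Some N \<and> all_square_submatrices_invertible M
                 \<and> all_square_submatrices_invertible N))"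
proof (intro conjI allI impI)
  fix n m :: nat assume "2 \<le> n \<and> 2 \<le> m"
  then show "pdom (Jpow n :: 'a::ring_1^3^3 \<Rightarrow> _) = pdom (Jpow m :: 'a^3^3 \<Rightarrow> _)"
    using pdom_Jpow by metis
next
  fix n :: nat assume "2 \<le> n"
  then show "pdom (Jpow n :: 'a^3^3 \<Rightarrow> _) = pdom Jmap \<inter> pdom Jinvmap"
    using pdom_Jpow pdom_JJ by metis
next
  fix n :: nat and M :: "'a^3^3" assume "2 \<le> n"
  then have "M \<in> pdom (Jpow n) \<longleftrightarrow> core M" using pdom_Jpow by blast
  then show "M \<in> pdom (Jpow n) \<longleftrightarrow>
            (\<exists>N. J2 M = Some N \<and> all_square_submatrices_invertible M
                 \<and> all_square_submatrices_invertible N)"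
    using core_iff_sub by blast
qed

end
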